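(* Let $G$ be a group with a finite restricted triangular presentation $\langle S\mid R\rangle$, and let $L=\mathrm{Lk}(v[e],Flag(G,S))$. Then every embedded cycle of length $5$ in $L$ has a diagonal.
   Context: Let $G$ be a group, $S\subset G$ a finite generating set with $S\cap S^{-1}=\emptyset$. The Cayley graph $\Gamma(G,S)$ has vertices $v[g]$, $g\in G$, and a directed edge from $v[g]$ to $v[gs]$ for each $g\in G,s\in S$; $Flag(G,S)$ is its flag complex (a simplex for every finite set of pairwise adjacent vertices). A presentation $\langle S\mid R\rangle$ of $G$ is a restricted triangular presentation if: $S\cap S^{-1}=\emptyset$; $R=\{a\cdot b\cdot c^{-1}\mid a,b,c\in S,\ abc^{-1}=e\text{ in }G\}$ and $\langle S\mid R\rangle$ presents $G$; there are no $a,b,c\in S$ with $abc=e$ in $G$; and for $a,b,c\in S$, $abc\in S$ implies $ab\in S$ and $bc\in S$. The link of a simplex $\sigma$ in $X$ is $\mathrm{Lk}(\sigma,X)=\{\tau\in X\mid \tau\cap\sigma=\emptyset,\ \tau\cup\sigma\in X\}$. Concretely, $L$ has vertices $v[s]$, $s\in S\cup S^{-1}$, and an edge, oriented from $v[g]$ to $v[ga]$, whenever $g, ga\in S\cup S^{-1}$ with $a\in S$. An embedded cycle is an injective simplicial image of a triangulated circle; its length is its number of edges; a diagonal is an edge joining two nonconsecutive vertices of the cycle. *)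

theory Defs
  imports "HOL-Algebra.Algebra"
begin

text \<open>A letter (s, True) stands for s, (s, False) for s inverse.\<close>
type_synonym 'a word = "('a \<times> bool) list"

definition letter_val :: "('a, 'b) monoid_scheme \<Rightarrow> 'a \<times> bool \<Rightarrow> 'a" where
  "letter_val G l = (if snd l then fst l else inv\<^bsub>G\<^esub> (fst l))"

definition word_eval :: "('a, 'b) monoid_scheme \<Rightarrow> 'a word \<Rightarrow> 'a" where
  "word_eval G w = foldr (\<lambda>l acc. letter_val G l \<otimes>\<^bsub>G\<^esub> acc) w \<one>\<^bsub>G\<^esub>"

definition tri_relators :: "('a, 'b) monoid_scheme \<Rightarrow> 'a set \<Rightarrow> 'a word set" where
  "tri_relators G S = {[(a, True), (b, True), (c, False)] | a b c.
      a \<in> S \<and> b \<in> S \<and> c \<in> S \<and> a \<otimes>\<^bsub>G\<^esub> b \<otimes>\<^bsub>G\<^esub> inv\<^bsub>G\<^esub> c = \<one>\<^bsub>G\<^esub>}"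

inductive pres_step :: "'a word set \<Rightarrow> 'a word \<Rightarrow> 'a word \<Rightarrow> bool" for R where
  cancel: "pres_step R (u @ [(s, b), (s, \<not> b)] @ v) (u @ v)"
| relator: "r \<in> R \<Longrightarrow> pres_step R (u @ r @ v) (u @ v)"

definition pres_equiv :: "'a word set \<Rightarrow> 'a word \<Rightarrow> 'a word \<Rightarrow> bool" where
  "pres_equiv R = (symclp (pres_step R))\<^sup>*\<^sup>*"

text \<open><S | R> presents G: S generates G, and every word over S that is trivial
  in G is trivial in the group <S | R> (relators of R hold in G by construction).\<close>
definition presents :: "('a, 'b) monoid_scheme \<Rightarrow> 'a set \<Rightarrow> 'a word set \<Rightarrow> bool" where
  "presents G S R \<longleftrightarrow> S \<subseteq> carrier G \<and> generate G S = carrier G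
     \<and> (\<forall>w\<in>R. set w \<subseteq> S \<times> UNIV \<and> word_eval G w = \<one>\<^bsub>G\<^esub>)
     \<and> (\<forall>w. set w \<subseteq> S \<times> UNIV \<longrightarrow> word_eval G w = \<one>\<^bsub>G\<^esub> \<longrightarrow> pres_equiv R w [])"

definition restricted_triangular_presentation :: "('a, 'b) monoid_scheme \<Rightarrow> 'a set \<Rightarrow> bool" where
  "restricted_triangular_presentation G S \<longleftrightarrow>
     S \<subseteq> carrier G
   \<and> S \<inter> (\<lambda>s. inv\<^bsub>G\<^esub> s) ` S = {}
   \<and> presents G S (tri_relators G S)
   \<and> (\<forall>a\<in>S. \<forall>b\<in>S. \<forall>c\<in>S. a \<otimes>\<^bsub>G\<^esub> b \<otimes>\<^bsub>G\<^esub> c \<noteq> \<one>\<^bsub>G\<^esub>)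
   \<and> (\<forall>a\<in>S. \<forall>b\<in>S. \<forall>c\<in>S. a \<otimes>\<^bsub>G\<^esub> b \<otimes>\<^bsub>G\<^esub> c \<in> S \<longrightarrow>
        a \<otimes>\<^bsub>G\<^esub> b \<in> S \<and> b \<otimes>\<^bsub>G\<^esub> c \<in> S)"

definition cayley_adj :: "('a, 'b) monoid_scheme \<Rightarrow> 'a set \<Rightarrow> 'a \<Rightarrow> 'a \<Rightarrow> bool" where
  "cayley_adj G S g h \<longleftrightarrow> g \<in> carrier G \<and> h \<in> carrier G \<and>
     (\<exists>s\<in>S. h = g \<otimes>\<^bsub>G\<^esub> s \<or> g = h \<otimes>\<^bsub>G\<^esub> s)"

definition flag_complex :: "('a, 'b) monoid_scheme \<Rightarrow> 'a set \<Rightarrow> 'a set set" where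
  "flag_complex G S = {A. finite A \<and> A \<noteq> {} \<and> A \<subseteq> carrier G \<and>
     (\<forall>x\<in>A. \<forall>y\<in>A. x \<noteq> y \<longrightarrow> cayley_adj G S x y)}"

definition simplicial_link :: "'a set \<Rightarrow> 'a set set \<Rightarrow> 'a set set" where
  "simplicial_link A K = {t. t \<in> K \<and> t Int A = {} \<and> (t Un A) \<in> K}"

definition embedded_cycle :: "'a set set \<Rightarrow> nat \<Rightarrow> (nat \<Rightarrow> 'a) \<Rightarrow> bool" where
  "embedded_cycle K n c \<longleftrightarrow> n \<ge> 3 \<and> inj_on c {..<n} \<and>
     (\<forall>i<n. {c i} \<in> K \<and> {c i, c (Suc i mod n)} \<in> K)"

definition has_diagonal :: "'a set set \<Rightarrow> nat \<Rightarrow> (nat \<Rightarrow> 'a) \<Rightarrow> bool" where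
  "has_diagonal K n c \<longleftrightarrow> (\<exists>i<n. \<exists>j<n. i \<noteq> j \<and> j \<noteq> Suc i mod n \<and> i \<noteq> Suc j mod n
      \<and> {c i, c j} \<in> K)"

end

theory Submission
  imports Defs
begin

lemma comb5:
  assumes "R e va \<or> R va e"
   and "R va vb \<or> R vb va"
   and "\<not> (R e va \<and> R va vb \<and> R vb e)"
   and "\<not> (R e vb \<and> R vb va \<and> R va e)"
   and "R va vb \<Longrightarrow> R vb vc \<Longrightarrow> R vc e \<Longrightarrow> R va e \<Longrightarrow> D va vc"
   and "R e vc \<Longrightarrow> R vc vb \<Longrightarrow> R vb va \<Longrightarrow> R e va \<Longrightarrow> D va vc"
   and "R vb vc \<Longrightarrow> R vc e \<Longrightarrow> R e va \<Longrightarrow> R vb va \<Longrightarrow> D va vc"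
   and "R va e \<Longrightarrow> R e vc \<Longrightarrow> R vc vb \<Longrightarrow> R va vb \<Longrightarrow> D va vc"
   and "R vc e \<Longrightarrow> R e va \<Longrightarrow> R va vb \<Longrightarrow> R vc vb \<Longrightarrow> D va vc"
   and "R vb va \<Longrightarrow> R va e \<Longrightarrow> R e vc \<Longrightarrow> R vb vc \<Longrightarrow> D va vc"
   and "R e va \<Longrightarrow> R va vb \<Longrightarrow> R vb vc \<Longrightarrow> R e vc \<Longrightarrow> D va vc"
   and "R vc vb \<Longrightarrow> R vb va \<Longrightarrow> R va e \<Longrightarrow> R vc e \<Longrightarrow> D va vc"
   and "R e vb \<or> R vb e"
   and "R vb vc \<or> R vc vb"
   and "\<not> (R e vb \<and> R vb vc \<and> R vc e)"
   and "\<not> (R e vc \<and> R vc vb \<and> R vb e)"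
   and "R vb vc \<Longrightarrow> R vc vd \<Longrightarrow> R vd e \<Longrightarrow> R vb e \<Longrightarrow> D vb vd"
   and "R e vd \<Longrightarrow> R vd vc \<Longrightarrow> R vc vb \<Longrightarrow> R e vb \<Longrightarrow> D vb vd"
   and "R vc vd \<Longrightarrow> R vd e \<Longrightarrow> R e vb \<Longrightarrow> R vc vb \<Longrightarrow> D vb vd"
   and "R vb e \<Longrightarrow> R e vd \<Longrightarrow> R vd vc \<Longrightarrow> R vb vc \<Longrightarrow> D vb vd"
   and "R vd e \<Longrightarrow> R e vb \<Longrightarrow> R vb vc \<Longrightarrow> R vd vc \<Longrightarrow> D vb vd"
   and "R vc vb \<Longrightarrow> R vb e \<Longrightarrow> R e vd \<Longrightarrow> R vc vd \<Longrightarrow> D vb vd"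
   and "R e vb \<Longrightarrow> R vb vc \<Longrightarrow> R vc vd \<Longrightarrow> R e vd \<Longrightarrow> D vb vd"
   and "R vd vc \<Longrightarrow> R vc vb \<Longrightarrow> R vb e \<Longrightarrow> R vd e \<Longrightarrow> D vb vd"
   and "R e vc \<or> R vc e"
   and "R vc vd \<or> R vd vc"
   and "\<not> (R e vc \<and> R vc vd \<and> R vd e)"
   and "\<not> (R e vd \<and> R vd vc \<and> R vc e)"
   and "R vc vd \<Longrightarrow> R vd vf \<Longrightarrow> R vf e \<Longrightarrow> R vc e \<Longrightarrow> D vc vf"
   and "R e vf \<Longrightarrow> R vf vd \<Longrightarrow> R vd vc \<Longrightarrow> R e vc \<Longrightarrow> D vc vf"
   and "R vd vf \<Longrightarrow> R vf e \<Longrightarrow> R e vc \<Longrightarrow> R vd vc \<Longrightarrow> D vc vf"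
   and "R vc e \<Longrightarrow> R e vf \<Longrightarrow> R vf vd \<Longrightarrow> R vc vd \<Longrightarrow> D vc vf"
   and "R vf e \<Longrightarrow> R e vc \<Longrightarrow> R vc vd \<Longrightarrow> R vf vd \<Longrightarrow> D vc vf"
   and "R vd vc \<Longrightarrow> R vc e \<Longrightarrow> R e vf \<Longrightarrow> R vd vf \<Longrightarrow> D vc vf"
   and "R e vc \<Longrightarrow> R vc vd \<Longrightarrow> R vd vf \<Longrightarrow> R e vf \<Longrightarrow> D vc vf"
   and "R vf vd \<Longrightarrow> R vd vc \<Longrightarrow> R vc e \<Longrightarrow> R vf e \<Longrightarrow> D vc vf"
   and "R e vd \<or> R vd e"
   and "R vd vf \<or> R vf vd"
   and "\<not> (R e vd \<and> R vd vf \<and> R vf e)"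
   and "\<not> (R e vf \<and> R vf vd \<and> R vd e)"
   and "R vd vf \<Longrightarrow> R vf va \<Longrightarrow> R va e \<Longrightarrow> R vd e \<Longrightarrow> D vd va"
   and "R e va \<Longrightarrow> R va vf \<Longrightarrow> R vf vd \<Longrightarrow> R e vd \<Longrightarrow> D vd va"
   and "R vf va \<Longrightarrow> R va e \<Longrightarrow> R e vd \<Longrightarrow> R vf vd \<Longrightarrow> D vd va"
   and "R vd e \<Longrightarrow> R e va \<Longrightarrow> R va vf \<Longrightarrow> R vd vf \<Longrightarrow> D vd va"
   and "R va e \<Longrightarrow> R e vd \<Longrightarrow> R vd vf \<Longrightarrow> R va vf \<Longrightarrow> D vd va"
   and "R vf vd \<Longrightarrow> R vd e \<Longrightarrow> R e va \<Longrightarrow> R vf va \<Longrightarrow> D vd va"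
   and "R e vd \<Longrightarrow> R vd vf \<Longrightarrow> R vf va \<Longrightarrow> R e va \<Longrightarrow> D vd va"
   and "R va vf \<Longrightarrow> R vf vd \<Longrightarrow> R vd e \<Longrightarrow> R va e \<Longrightarrow> D vd va"
   and "R e vf \<or> R vf e"
   and "R vf va \<or> R va vf"
   and "\<not> (R e vf \<and> R vf va \<and> R va e)"
   and "\<not> (R e va \<and> R va vf \<and> R vf e)"
   and "R vf va \<Longrightarrow> R va vb \<Longrightarrow> R vb e \<Longrightarrow> R vf e \<Longrightarrow> D vf vb"
   and "R e vb \<Longrightarrow> R vb va \<Longrightarrow> R va vf \<Longrightarrow> R e vf \<Longrightarrow> D vf vb"
   and "R va vb \<Longrightarrow> R vb e \<Longrightarrow> R e vf \<Longrightarrow> R va vf \<Longrightarrow> D vf vb"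
   and "R vf e \<Longrightarrow> R e vb \<Longrightarrow> R vb va \<Longrightarrow> R vf va \<Longrightarrow> D vf vb"
   and "R vb e \<Longrightarrow> R e vf \<Longrightarrow> R vf va \<Longrightarrow> R vb va \<Longrightarrow> D vf vb"
   and "R va vf \<Longrightarrow> R vf e \<Longrightarrow> R e vb \<Longrightarrow> R va vb \<Longrightarrow> D vf vb"
   and "R e vf \<Longrightarrow> R vf va \<Longrightarrow> R va vb \<Longrightarrow> R e vb \<Longrightarrow> D vf vb"
   and "R vb va \<Longrightarrow> R va vf \<Longrightarrow> R vf e \<Longrightarrow> R vb e \<Longrightarrow> D vf vb"
  shows "D va vc \<or> D vb vd \<or> D vc vf \<or> D vd va \<or> D vf vb"
  using assms by sat

definition arc :: "('a, 'b) monoid_scheme \<Rightarrow> 'a set \<Rightarrow> 'a \<Rightarrow> 'a \<Rightarrow> bool" where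
  "arc G S u v \<longleftrightarrow> u \<in> carrier G \<and> v \<in> carrier G \<and> (\<exists>s\<in>S. v = u \<otimes>\<^bsub>G\<^esub> s)"

lemma adj_arc: "cayley_adj G S u v \<longleftrightarrow> arc G S u v \<or> arc G S v u"
  unfolding cayley_adj_def arc_def by blast

lemma arcE:
  assumes "arc G S u v" obtains s where "s \<in> S" "v = u \<otimes>\<^bsub>G\<^esub> s" "u \<in> carrier G" "v \<in> carrier G"
  using assms unfolding arc_def by blast

lemma arcI:
  fixes G (structure)
  assumes "u \<in> carrier G" "s \<in> S" "S \<subseteq> carrier G" "group G"
  shows "arc G S u (u \<otimes> s)"
proof -
  interpret group G by fact
  have "s \<in> carrier G" using assms(2,3) by blast
  hence "u \<otimes> s \<in> carrier G" using assms(1) by simp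
  thus ?thesis unfolding arc_def using assms(1,2) by blast
qed

lemma rtp_D:
  assumes rt: "restricted_triangular_presentation G S"
  shows "S \<subseteq> carrier G"
    and "\<And>a b c. a\<in>S \<Longrightarrow> b\<in>S \<Longrightarrow> c\<in>S \<Longrightarrow> a \<otimes>\<^bsub>G\<^esub> b \<otimes>\<^bsub>G\<^esub> c \<noteq> \<one>\<^bsub>G\<^esub>"
    and "\<And>a b c. a\<in>S \<Longrightarrow> b\<in>S \<Longrightarrow> c\<in>S \<Longrightarrow> a \<otimes>\<^bsub>G\<^esub> b \<otimes>\<^bsub>G\<^esub> c \<in> S \<Longrightarrow> a \<otimes>\<^bsub>G\<^esub> b \<in> S"
    and "\<And>a b c. a\<in>S \<Longrightarrow> b\<in>S \<Longrightarrow> c\<in>S \<Longrightarrow> a \<otimes>\<^bsub>G\<^esub> b \<otimes>\<^bsub>G\<^esub> c \<in> S \<Longrightarrow> b \<otimes>\<^bsub>G\<^esub> c \<in> S"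
proof -
  note x = rt[unfolded restricted_triangular_presentation_def]
  show "S \<subseteq> carrier G" using x by (rule conjunct1)
  have y: "\<forall>a\<in>S. \<forall>b\<in>S. \<forall>c\<in>S. a \<otimes>\<^bsub>G\<^esub> b \<otimes>\<^bsub>G\<^esub> c \<noteq> \<one>\<^bsub>G\<^esub>"
    using x[THEN conjunct2, THEN conjunct2, THEN conjunct2] by (rule conjunct1)
  have z: "\<forall>a\<in>S. \<forall>b\<in>S. \<forall>c\<in>S. a \<otimes>\<^bsub>G\<^esub> b \<otimes>\<^bsub>G\<^esub> c \<in> S \<longrightarrow>
        a \<otimes>\<^bsub>G\<^esub> b \<in> S \<and> b \<otimes>\<^bsub>G\<^esub> c \<in> S"
    using x[THEN conjunct2, THEN conjunct2, THEN conjunct2] by (rule conjunct2)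
  fix a b c assume "a\<in>S" "b\<in>S" "c\<in>S"
  then show "a \<otimes>\<^bsub>G\<^esub> b \<otimes>\<^bsub>G\<^esub> c \<noteq> \<one>\<^bsub>G\<^esub>" using y by blast
  show "a \<otimes>\<^bsub>G\<^esub> b \<otimes>\<^bsub>G\<^esub> c \<in> S \<Longrightarrow> a \<otimes>\<^bsub>G\<^esub> b \<in> S" using z \<open>a\<in>S\<close> \<open>b\<in>S\<close> \<open>c\<in>S\<close> by blast
  show "a \<otimes>\<^bsub>G\<^esub> b \<otimes>\<^bsub>G\<^esub> c \<in> S \<Longrightarrow> b \<otimes>\<^bsub>G\<^esub> c \<in> S" using z \<open>a\<in>S\<close> \<open>b\<in>S\<close> \<open>c\<in>S\<close> by blast
qed

lemma arc_prod:
  fixes G (structure)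
  assumes G: "group G" and SG: "S \<subseteq> carrier G"
    and "arc G S u v" "arc G S v w" "arc G S w z"
  obtains a b c where "a \<in> S" "b \<in> S" "c \<in> S" "v = u \<otimes> a" "w = u \<otimes> (a \<otimes> b)"
    "z = u \<otimes> (a \<otimes> b \<otimes> c)" "z = v \<otimes> (b \<otimes> c)" "u \<in> carrier G"
proof -
  interpret group G by fact
  obtain a where a: "a \<in> S" "v = u \<otimes> a" "u \<in> carrier G" using assms(3) by (rule arcE)
  obtain b where b: "b \<in> S" "w = v \<otimes> b" using assms(4) by (rule arcE)
  obtain c where c: "c \<in> S" "z = w \<otimes> c" using assms(5) by (rule arcE)
  have ac: "a \<in> carrier G" "b \<in> carrier G" "c \<in> carrier G" using a b c SG by auto
  have 1: "w = u \<otimes> (a \<otimes> b)" using ac a(3) unfolding b(2) a(2) by (simp add: m_assoc)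
  have 2: "z = u \<otimes> (a \<otimes> b \<otimes> c)" using ac a(3) unfolding c(2) 1 by (simp add: m_assoc)
  have 3: "z = v \<otimes> (b \<otimes> c)" using ac a(3) unfolding 2 a(2) by (simp add: m_assoc)
  show ?thesis using that a b c 1 2 3 by blast
qed

lemma arc_rules:
  fixes G (structure)
  assumes G: "group G" and rt: "restricted_triangular_presentation G S"
    and "arc G S u v" "arc G S v w" "arc G S w z" "arc G S u z"
  shows "cayley_adj G S u w" "cayley_adj G S v z"
proof -
  interpret group G by fact
  note SG = rtp_D(1)[OF rt]
  obtain a b c where abc: "a \<in> S" "b \<in> S" "c \<in> S" "v = u \<otimes> a" "w = u \<otimes> (a \<otimes> b)"
    "z = u \<otimes> (a \<otimes> b \<otimes> c)" "z = v \<otimes> (b \<otimes> c)" "u \<in> carrier G"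
    using arc_prod[OF G SG assms(3-5)] by blast
  obtain d where d: "d \<in> S" "z = u \<otimes> d" using assms(6) by (rule arcE)
  have ac: "a \<in> carrier G" "b \<in> carrier G" "c \<in> carrier G" "d \<in> carrier G" using abc d SG by auto
  have "u \<otimes> (a \<otimes> b \<otimes> c) = u \<otimes> d" using abc(6) d(2) by simp
  hence e: "a \<otimes> b \<otimes> c = d" using ac abc(8) by simp
  have "a \<otimes> b \<in> S" using rtp_D(3)[OF rt abc(1-3)] e d(1) by simp
  hence "arc G S u w" unfolding abc(5) using arcI[OF abc(8) _ SG G] by simp
  thus "cayley_adj G S u w" by (simp add: adj_arc)
  have "b \<otimes> c \<in> S" using rtp_D(4)[OF rt abc(1-3)] e d(1) by simp
  moreover have "v \<in> carrier G" using abc(4,8) ac by simp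
  ultimately have "arc G S v z" unfolding abc(7) using arcI[OF _ _ SG G] by blast
  thus "cayley_adj G S v z" by (simp add: adj_arc)
qed

lemma arc_acyc:
  fixes G (structure)
  assumes G: "group G" and rt: "restricted_triangular_presentation G S"
  shows "\<not> (arc G S u v \<and> arc G S v w \<and> arc G S w u)"
proof
  interpret group G by fact
  note SG = rtp_D(1)[OF rt]
  assume "arc G S u v \<and> arc G S v w \<and> arc G S w u"
  then obtain a b c where abc: "a \<in> S" "b \<in> S" "c \<in> S" "u = u \<otimes> (a \<otimes> b \<otimes> c)" "u \<in> carrier G"
    using arc_prod[OF G SG] by metis
  have ac: "a \<in> carrier G" "b \<in> carrier G" "c \<in> carrier G" using abc SG by auto
  have "a \<otimes> b \<otimes> c = \<one>" using abc(4,5) ac by (metis l_cancel_one' m_closed)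
  thus False using rtp_D(2)[OF rt abc(1-3)] by blast
qed

lemma link_vertex:
  fixes G (structure)
  assumes "{x} \<in> simplicial_link {\<one>} (flag_complex G S)"
  shows "x \<in> carrier G" "x \<noteq> \<one>" "cayley_adj G S \<one> x"
proof -
  have A: "{x} \<inter> {\<one>} = {}" "insert x {\<one>} \<in> flag_complex G S"
    using assms unfolding simplicial_link_def by (auto simp: insert_commute)
  show "x \<noteq> \<one>" using A(1) by auto
  then show "x \<in> carrier G" "cayley_adj G S \<one> x" using A(2) unfolding flag_complex_def by auto
qed

lemma link_edge:
  fixes G (structure)
  assumes "{x, y} \<in> simplicial_link {\<one>} (flag_complex G S)" "x \<noteq> y"
  shows "cayley_adj G S x y"
proof -
  have "{x, y} \<in> flag_complex G S" using assms unfolding simplicial_link_def by auto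
  thus ?thesis using assms(2) unfolding flag_complex_def by auto
qed

lemma link_edgeI:
  fixes G (structure)
  assumes "x \<in> carrier G" "x \<noteq> \<one>" "cayley_adj G S \<one> x"
    "y \<in> carrier G" "y \<noteq> \<one>" "cayley_adj G S \<one> y" "cayley_adj G S x y" "x \<noteq> y"
    and sym: "\<And>u v. cayley_adj G S u v \<Longrightarrow> cayley_adj G S v u" and one: "\<one> \<in> carrier G"
  shows "{x, y} \<in> simplicial_link {\<one>} (flag_complex G S)"
  unfolding simplicial_link_def flag_complex_def
  using assms by (auto simp: insert_commute)

theorem mainTheorem3:
  fixes G (structure) and S :: "'a set"
  assumes "group G"
    and "finite S"
    and "restricted_triangular_presentation G S"
  shows "\<forall>c. embedded_cycle (simplicial_link {\<one>} (flag_complex G S)) 5 c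
           \<longrightarrow> has_diagonal (simplicial_link {\<one>} (flag_complex G S)) 5 c"
proof (intro allI impI)
  fix c
  let ?L = "simplicial_link {\<one>} (flag_complex G S)"
  let ?R = "arc G S" and ?D = "cayley_adj G S"
  have sym: "\<And>u v. ?D u v \<Longrightarrow> ?D v u" unfolding cayley_adj_def by blast
  have one: "\<one> \<in> carrier G" using assms(1) by (simp add: group.is_monoid monoid.one_closed)
  assume ec: "embedded_cycle ?L 5 c"
  have inj: "inj_on c {..<5}" and cyc: "\<And>i. i < 5 \<Longrightarrow> {c i} \<in> ?L \<and> {c i, c (Suc i mod 5)} \<in> ?L"
    using ec unfolding embedded_cycle_def by auto
  have vert: "c i \<in> carrier G" "c i \<noteq> \<one>" "?D \<one> (c i)" if "i < 5" for i
    using link_vertex[of "c i" G S] cyc[OF that] by auto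
  have neq: "c i \<noteq> c j" if "i < 5" "j < 5" "i \<noteq> j" for i j
    using inj that unfolding inj_on_def by auto
  have edge: "?D (c i) (c (Suc i mod 5))" if "i < 5" for i
  proof (rule link_edge)
    show "{c i, c (Suc i mod 5)} \<in> ?L" using cyc[OF that] by simp
    show "c i \<noteq> c (Suc i mod 5)" using that by (intro neq) (auto simp: mod_Suc)
  qed
  have diag: "has_diagonal ?L 5 c" if "i < 5" "j < 5" "j \<noteq> Suc i mod 5" "i \<noteq> Suc j mod 5" "i \<noteq> j"
     "?D (c i) (c j)" for i j
  proof -
    have "{c i, c j} \<in> ?L"
      by (rule link_edgeI) (use vert[OF that(1)] vert[OF that(2)] that(6) neq[OF that(1,2,5)] sym one in auto)
    thus ?thesis unfolding has_diagonal_def using that by blast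
  qed
  have ee: "?R (c i) (c j) \<or> ?R (c j) (c i)" if "i<5" "j = Suc i mod 5" for i j
    using edge[OF that(1)] that(2) by (simp add: adj_arc)
  have he: "?R \<one> (c i) \<or> ?R (c i) \<one>" if "i<5" for i
    using vert[OF that] by (simp add: adj_arc)
  have ee0: "?R (c 0) (c 1) \<or> ?R (c 1) (c 0)" by (rule ee[of 0 1]) simp_all
  have ee1: "?R (c 1) (c 2) \<or> ?R (c 2) (c 1)" by (rule ee[of 1 2]) simp_all
  have ee2: "?R (c 2) (c 3) \<or> ?R (c 3) (c 2)" by (rule ee[of 2 3]) simp_all
  have ee3: "?R (c 3) (c 4) \<or> ?R (c 4) (c 3)" by (rule ee[of 3 4]) simp_all
  have ee4: "?R (c 4) (c 0) \<or> ?R (c 0) (c 4)" by (rule ee[of 4 0]) simp_all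
  have hes: "?R \<one> (c 0) \<or> ?R (c 0) \<one>" "?R \<one> (c 1) \<or> ?R (c 1) \<one>" "?R \<one> (c 2) \<or> ?R (c 2) \<one>" "?R \<one> (c 3) \<or> ?R (c 3) \<one>" "?R \<one> (c 4) \<or> ?R (c 4) \<one>"
    by (simp_all add: he)
  note ac = arc_acyc[OF assms(1,3)]
  note r1 = arc_rules(1)[OF assms(1,3)] and r2 = arc_rules(2)[OF assms(1,3)]
  have "?D (c 0) (c 2) \<or> ?D (c 1) (c 3) \<or> ?D (c 2) (c 4) \<or> ?D (c 3) (c 0) \<or> ?D (c 4) (c 1)"
    apply (rule comb5[where R="?R" and D="?D" and e="\<one>" and va="c 0" and vb="c 1" and vc="c 2" and vd="c 3" and vf="c 4"])
    apply (rule ee0 ee1 ee2 ee3 ee4 hes ac | blast intro: r1 r2 sym)+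
    done
  thus "has_diagonal ?L 5 c"
  proof (elim disjE)
    assume "?D (c 0) (c 2)" thus "has_diagonal ?L 5 c" by (rule diag[rotated 5]) simp_all
  next
    assume "?D (c 1) (c 3)" thus "has_diagonal ?L 5 c" by (rule diag[rotated 5]) simp_all
  next
    assume "?D (c 2) (c 4)" thus "has_diagonal ?L 5 c" by (rule diag[rotated 5]) simp_all
  next
    assume "?D (c 3) (c 0)" thus "has_diagonal ?L 5 c" by (rule diag[rotated 5]) simp_all
  next
    assume "?D (c 4) (c 1)" thus "has_diagonal ?L 5 c" by (rule diag[rotated 5]) simp_all
  qed
qed

end
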